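(* For all integers $n,d\ge0$, $T(n,\omega^d)\le P(n,\omega^d)$.
   Context: $[c]=\{1,\dots,c\}$; ordinals are identified with sets of smaller ordinals; $\approx$ is order-equivalence; $\binom{S}{n}$ is the set of $n$-element subsets. $T(n,S)$ is the least $t\in\mathbb{N}$ such that for every $c\ge1$ and every $\mathrm{COL}:\binom{S}{n}\to[c]$ there is $S'\subseteq S$, $S'\approx S$, with $|\mathrm{COL}(\binom{S'}{n})|\le t$ ($\infty$ if none). Every $\beta<\omega^d\cdot k$ is uniquely $\omega^d b+\sum_{j<d}\omega^j a_j$ with $0\le b<k$, $a_j\in\mathbb{N}$. A coloring rule (CR) on $\binom{\omega^d\cdot k}{n}$ is a pair $(\mathcal{Y},\preceq)$ with $\mathcal{Y}:\{1,\dots,n\}\to\{0,\dots,k-1\}$ and $\preceq$ a total preorder on $I=\{(i,j):1\le i\le n,0\le j<d\}$ (with induced equivalence $\equiv$ and strict part $\prec$) such that: (1) if $d\ge1$, $(i,0)\prec(i',0)$ for $i<i'$; if $d=0$, $\mathcal{Y}(i)<\mathcal{Y}(i')$ for $i<i'$; (2) $(i,j)\equiv(i',j)$ for some $j$ implies $\mathcal{Y}(i)=\mathcal{Y}(i')$; (3) $(i,j)\prec(i,j')$ for $j>j'$; (4) $(i,j)\equiv(i',j')$ implies $j=j'$; (5) for $j>0$, $(i,j)\not\equiv(i',j)$ implies $(i,j-1)\not\equiv(i',j-1)$. $P(n,\omega^d\cdot k)$ is the total number of CRs on $\binom{\omega^d\cdot k}{n}$, and $P(n,\omega^d)=P(n,\omega^d\cdot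 1)$. *)

theory Defs
  imports Main "HOL-Library.FuncSet" "HOL-Library.List_Lexorder" "HOL-Library.Extended_Nat"
begin

definition order_equiv :: "'a::linorder set \<Rightarrow> 'a set \<Rightarrow> bool" where
  "order_equiv A B \<longleftrightarrow> (\<exists>f. bij_betw f A B \<and> strict_mono_on A f)"

definition nsubsets :: "'a set \<Rightarrow> nat \<Rightarrow> 'a set set" where
  "nsubsets S n = {X. X \<subseteq> S \<and> finite X \<and> card X = n}"

definition T_bound_ok :: "nat \<Rightarrow> 'a::linorder set \<Rightarrow> nat \<Rightarrow> bool" where
  "T_bound_ok n S t \<longleftrightarrow>
     (\<forall>c::nat. c \<ge> 1 \<longrightarrow> (\<forall>COL :: 'a set \<Rightarrow> nat.
        (\<forall>X\<in>nsubsets S n. COL X \<in> {1..c}) \<longrightarrow>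
        (\<exists>S'. S' \<subseteq> S \<and> order_equiv S' S \<and> card (COL ` nsubsets S' n) \<le> t)))"

definition T_num :: "nat \<Rightarrow> 'a::linorder set \<Rightarrow> enat" where
  "T_num n S = (if \<exists>t. T_bound_ok n S t then enat (LEAST t. T_bound_ok n S t) else \<infinity>)"

text \<open>The ordinal omega^d (d finite) is represented by its Cantor normal form
  coefficient lists [a_(d-1), ..., a_0] of length d, ordered lexicographically
  (most significant coefficient first); this has order type omega^d.\<close>

definition omega_pow :: "nat \<Rightarrow> nat list set" where
  "omega_pow d = {xs. length xs = d}"

definition CR_index :: "nat \<Rightarrow> nat \<Rightarrow> (nat \<times> nat) set" where
  "CR_index n d = {1..n} \<times> {0..<d}"

definition is_CR :: "nat \<Rightarrow> nat \<Rightarrow> nat \<Rightarrow> (nat \<Rightarrow> nat) \<Rightarrow> ((nat \<times> nat) \<times> (nat \<times> nat)) set \<Rightarrow> bool" where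
  "is_CR n d k Y R \<longleftrightarrow>
     (let I = CR_index n d;
          prec = (\<lambda>x y. (x, y) \<in> R \<and> (y, x) \<notin> R);
          eqv = (\<lambda>x y. (x, y) \<in> R \<and> (y, x) \<in> R)
      in Y \<in> {1..n} \<rightarrow>\<^sub>E {0..<k}
       \<and> R \<subseteq> I \<times> I \<and> preorder_on I R \<and> total_on I R
       \<comment> \<open>(1)\<close>
       \<and> (d \<ge> 1 \<longrightarrow> (\<forall>i\<in>{1..n}. \<forall>i'\<in>{1..n}. i < i' \<longrightarrow> prec (i, 0) (i', 0)))
       \<and> (d = 0 \<longrightarrow> (\<forall>i\<in>{1..n}. \<forall>i'\<in>{1..n}. i < i' \<longrightarrow> Y i < Y i'))
       \<comment> \<open>(2)\<close>
       \<and> (\<forall>i\<in>{1..n}. \<forall>i'\<in>{1..n}. \<forall>j<d. eqv (i, j) (i', j) \<longrightarrow> Y i = Y i')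
       \<comment> \<open>(3)\<close>
       \<and> (\<forall>i\<in>{1..n}. \<forall>j<d. \<forall>j'<d. j > j' \<longrightarrow> prec (i, j) (i, j'))
       \<comment> \<open>(4)\<close>
       \<and> (\<forall>i\<in>{1..n}. \<forall>i'\<in>{1..n}. \<forall>j<d. \<forall>j'<d. eqv (i, j) (i', j') \<longrightarrow> j = j')
       \<comment> \<open>(5)\<close>
       \<and> (\<forall>i\<in>{1..n}. \<forall>i'\<in>{1..n}. \<forall>j<d. j > 0 \<longrightarrow>
            \<not> eqv (i, j) (i', j) \<longrightarrow> \<not> eqv (i, j - 1) (i', j - 1)))"

definition P_num :: "nat \<Rightarrow> nat \<Rightarrow> nat \<Rightarrow> nat" where
  "P_num n d k = card {(Y, R). is_CR n d k Y R}"

end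

theory Submission
  imports Defs "HOL-Library.Ramsey" "HOL-Library.Nat_Bijection" "HOL-Library.Infinite_Set"
begin


fun psi :: "nat list \<Rightarrow> nat" where
  "psi [] = 0"
| "psi (a # r) = Suc (prod_encode (psi r, a))"

definition lab :: "nat list \<Rightarrow> nat" where
  "lab xs = psi (rev xs)"

lemma lab_snoc: "lab (xs @ [a]) = Suc (prod_encode (lab xs, a))"
  by (simp add: lab_def)

lemma inj_psi: "inj psi"
proof (rule injI)
  fix x y show "psi x = psi y \<Longrightarrow> x = y"
  proof (induction x arbitrary: y)
    case Nil then show ?case by (cases y) auto
  next
    case (Cons a r) then show ?case by (cases y) (auto simp: prod_encode_eq)
  qed
qed

lemma inj_lab: "inj lab"
  unfolding lab_def using inj_psi by (metis injI inj_eq rev_rev_ident)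

lemma lab_prefix_less: "k < k' \<Longrightarrow> k' \<le> length z \<Longrightarrow> lab (take k z) < lab (take k' z)"
proof (induction k')
  case 0 then show ?case by simp
next
  case (Suc k')
  have t: "take (Suc k') z = take k' z @ [z ! k']"
    using Suc.prems by (simp add: take_Suc_conv_app_nth)
  have "lab (take k' z) < lab (take (Suc k') z)"
    unfolding t lab_snoc using le_prod_encode_1 by (simp add: le_imp_less_Suc)
  then show ?case using Suc by (cases "k = k'") auto
qed

lemma triangle_less: "a < b \<Longrightarrow> triangle a < triangle (b::nat)"
  by (rule lift_Suc_mono_less[of triangle]) auto

lemma lab_sib: "a < b \<Longrightarrow> lab (p @ [a]) < lab (p @ [b])"
  unfolding lab_snoc by (simp add: prod_encode_def triangle_less)



lemma rank_aux:
  fixes V :: "nat set"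
  assumes "finite V" "a \<in> V" "b \<in> V" "a < b"
  shows "card {v\<in>V. v < a} < card {v\<in>V. v < b}"
proof (rule psubset_card_mono)
  show "finite {v\<in>V. v < b}" using assms(1) by simp
  have "{v\<in>V. v < a} \<subseteq> {v\<in>V. v < b}" using assms(4) by auto
  moreover have "a \<in> {v\<in>V. v < b}" "a \<notin> {v\<in>V. v < a}" using assms by auto
  ultimately show "{v\<in>V. v < a} \<subset> {v\<in>V. v < b}" by blast
qed

lemma pullback_eq:
  fixes f g :: "'a \<Rightarrow> nat"
  assumes fin: "finite I" and le: "\<forall>p\<in>I. \<forall>q\<in>I. (f p \<le> f q) = (g p \<le> g q)"
    and im: "f ` I = g ` I" and p: "p \<in> I"
  shows "f p = g p"
proof -
  have lt: "f q < f p \<longleftrightarrow> g q < g p" if "q \<in> I" for q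
    using le p that by (meson not_le)
  have eqv: "f q1 = f q2 \<longleftrightarrow> g q1 = g q2" if "q1 \<in> I" "q2 \<in> I" for q1 q2
  proof -
    have "(f q1 \<le> f q2) = (g q1 \<le> g q2)" "(f q2 \<le> f q1) = (g q2 \<le> g q1)" using le that by auto
    then show ?thesis by (metis order_antisym order_refl)
  qed
  define A where "A = {q\<in>I. f q < f p}"
  have A2: "A = {q\<in>I. g q < g p}" unfolding A_def using lt by blast
  define k where "k v = g (inv_into I f v)" for v
  have kf: "k (f q) = g q" if "q \<in> I" for q
  proof -
    have "inv_into I f (f q) \<in> I" "f (inv_into I f (f q)) = f q"
      using that by (auto intro: inv_into_into f_inv_into_f)
    then show ?thesis unfolding k_def using eqv that by blast
  qed
  have injk: "inj_on k (f ` I)"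
  proof (rule inj_onI)
    fix u v assume "u \<in> f ` I" "v \<in> f ` I" "k u = k v"
    then obtain q1 q2 where "q1 \<in> I" "q2 \<in> I" "u = f q1" "v = f q2" "g q1 = g q2"
      using kf by auto
    then show "u = v" using eqv by blast
  qed
  have AI: "A \<subseteq> I" unfolding A_def by blast
  have gA: "g ` A = k ` f ` A"
  proof -
    have "k ` f ` A = (\<lambda>q. k (f q)) ` A" by (simp add: image_image)
    also have "\<dots> = g ` A" using kf AI by (intro image_cong) auto
    finally show ?thesis by simp
  qed
  have "card (g ` A) = card (f ` A)"
    unfolding gA by (rule card_image) (rule inj_on_subset[OF injk], use AI in blast)
  moreover have "f ` A = {v \<in> f ` I. v < f p}" unfolding A_def by blast
  moreover have "g ` A = {v \<in> g ` I. v < g p}" unfolding A2 by blast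
  ultimately have eq: "card {v \<in> f ` I. v < f p} = card {v \<in> f ` I. v < g p}" using im by simp
  have m: "f p \<in> f ` I" "g p \<in> f ` I" using p im by auto
  have fi: "finite (f ` I)" using fin by simp
  show ?thesis
  proof (rule linorder_cases[of "f p" "g p"])
    assume "f p < g p" then show ?thesis using rank_aux[OF fi m] eq by simp
  next
    assume "g p < f p" then show ?thesis using rank_aux[OF fi m(2) m(1)] eq by simp
  qed simp
qed



lemma multi_ramsey:
  fixes \<chi> :: "'k \<Rightarrow> nat set \<Rightarrow> nat"
  assumes "finite K" "infinite Z" "\<forall>k\<in>K. \<forall>V. \<chi> k V < s"
  shows "\<exists>H\<subseteq>Z. infinite H \<and> (\<forall>k\<in>K. \<exists>t. \<forall>V. V \<subseteq> H \<and> finite V \<and> card V = m k \<longrightarrow> \<chi> k V = t)"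
  using assms
proof (induction K arbitrary: Z rule: finite_induct)
  case empty then show ?case by blast
next
  case (insert k K)
  have "\<forall>k\<in>K. \<forall>V. \<chi> k V < s" using insert.prems(2) by simp
  then obtain H1 where H1: "H1 \<subseteq> Z" "infinite H1"
    "\<forall>k\<in>K. \<exists>t. \<forall>V. V \<subseteq> H1 \<and> finite V \<and> card V = m k \<longrightarrow> \<chi> k V = t"
    using insert.IH[OF insert.prems(1)] by blast
  have "\<forall>X. X \<subseteq> H1 \<and> finite X \<and> card X = m k \<longrightarrow> \<chi> k X < s" using insert.prems(2) by simp
  from Ramsey[OF H1(2) this] obtain H2 t where H2: "H2 \<subseteq> H1" "infinite H2"
    "\<forall>V. V \<subseteq> H2 \<and> finite V \<and> card V = m k \<longrightarrow> \<chi> k V = t"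
    by blast
  have "\<forall>k'\<in>insert k K. \<exists>t. \<forall>V. V \<subseteq> H2 \<and> finite V \<and> card V = m k' \<longrightarrow> \<chi> k' V = t"
  proof
    fix k' assume "k' \<in> insert k K"
    then show "\<exists>t. \<forall>V. V \<subseteq> H2 \<and> finite V \<and> card V = m k' \<longrightarrow> \<chi> k' V = t"
    proof
      assume "k' = k" then show ?thesis using H2(3) by blast
    next
      assume "k' \<in> K"
      then obtain t where "\<forall>V. V \<subseteq> H1 \<and> finite V \<and> card V = m k' \<longrightarrow> \<chi> k' V = t" using H1(3) by blast
      then show ?thesis using H2(1) by (meson order_trans)
    qed
  qed
  then show ?case using H1(1) H2(1,2) by (meson order_trans)
qed



definition emb :: "nat set \<Rightarrow> nat list \<Rightarrow> nat list" where
  "emb H x = map (\<lambda>t. enumerate H (lab (take (Suc t) x))) [0..<length x]"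

lemma emb_length[simp]: "length (emb H x) = length x"
  by (simp add: emb_def)

lemma emb_nth: "t < length x \<Longrightarrow> emb H x ! t = enumerate H (lab (take (Suc t) x))"
  by (simp add: emb_def)

lemma emb_in: "x \<in> omega_pow d \<Longrightarrow> emb H x \<in> omega_pow d"
  by (simp add: omega_pow_def)

lemma emb_mono:
  assumes H: "infinite H" and x: "x \<in> omega_pow d" and y: "y \<in> omega_pow d" and xy: "x < y"
  shows "emb H x < emb H y"
proof -
  have lx: "length x = d" and ly: "length y = d" using x y by (auto simp: omega_pow_def)
  from xy have "(x, y) \<in> lexord {(u, v). u < v}" by (simp add: list_less_def)
  then obtain i where i: "i < d" "take i x = take i y" "x ! i < y ! i"
    unfolding lexord_take_index_conv using lx ly by auto
  have tk: "take i (emb H x) = take i (emb H y)"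
  proof (rule nth_equalityI)
    show "length (take i (emb H x)) = length (take i (emb H y))" using lx ly by simp
  next
    fix t assume "t < length (take i (emb H x))"
    then have t: "t < i" using lx i by simp
    have "take (Suc t) x = take (Suc t) y"
      by (metis i(2) Suc_leI t min.absorb1 take_take)
    then show "take i (emb H x) ! t = take i (emb H y) ! t"
      using t i lx ly by (simp add: emb_nth)
  qed
  have "take (Suc i) x = take i x @ [x ! i]" "take (Suc i) y = take i y @ [y ! i]"
    using i lx ly by (auto simp: take_Suc_conv_app_nth)
  then have "emb H x ! i < emb H y ! i"
    using i lx ly H by (simp add: emb_nth lab_sib)
  then have "(emb H x, emb H y) \<in> lexord {(u, v). u < v}"
    unfolding lexord_take_index_conv using tk i lx ly by auto
  then show ?thesis by (simp add: list_less_def)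
qed

lemma emb_strict_mono: "infinite H \<Longrightarrow> strict_mono_on (omega_pow d) (emb H)"
  by (rule strict_mono_onI) (rule emb_mono)

lemma emb_order_equiv:
  assumes H: "infinite H"
  shows "order_equiv (emb H ` omega_pow d) (omega_pow d)"
proof -
  let ?S = "omega_pow d" and ?e = "emb H"
  have sm: "strict_mono_on ?S ?e" using emb_strict_mono[OF H] .
  have inj: "inj_on ?e ?S" using sm by (rule strict_mono_on_imp_inj_on)
  have bij: "bij_betw (inv_into ?S ?e) (?e ` ?S) ?S"
    by (rule bij_betw_inv_into) (use inj in \<open>simp add: inj_on_imp_bij_betw\<close>)
  have "strict_mono_on (?e ` ?S) (inv_into ?S ?e)"
  proof (rule strict_mono_onI)
    fix u v assume uv: "u \<in> ?e ` ?S" "v \<in> ?e ` ?S" "u < v"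
    then obtain a b where ab: "a \<in> ?S" "b \<in> ?S" "u = ?e a" "v = ?e b" by auto
    have ia: "inv_into ?S ?e u = a" "inv_into ?S ?e v = b" using ab inj by auto
    show "inv_into ?S ?e u < inv_into ?S ?e v"
    proof (rule ccontr)
      assume "\<not> ?thesis"
      then have "b \<le> a" using ia by simp
      then have "?e b \<le> ?e a" using sm ab
        by (metis order_le_less strict_mono_onD)
      then show False using uv ab by simp
    qed
  qed
  then show ?thesis unfolding order_equiv_def using bij by blast
qed



definition elt :: "nat list set \<Rightarrow> nat \<Rightarrow> nat list" where
  "elt X i = inv_into X last (sorted_list_of_set (last ` X) ! (i - 1))"

definition cf :: "nat \<Rightarrow> nat list set \<Rightarrow> nat \<times> nat \<Rightarrow> nat" where
  "cf d X p = elt X (fst p) ! (d - 1 - snd p)"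

definition ctype :: "nat \<Rightarrow> nat \<Rightarrow> nat list set \<Rightarrow> ((nat \<times> nat) \<times> (nat \<times> nat)) set" where
  "ctype n d X = {(p, q). p \<in> CR_index n d \<and> q \<in> CR_index n d \<and> cf d X p \<le> cf d X q}"

definition cvals :: "nat \<Rightarrow> nat \<Rightarrow> nat list set \<Rightarrow> nat set" where
  "cvals n d X = cf d X ` CR_index n d"

lemma elt_props:
  assumes fin: "finite X" and inj: "inj_on last X" and cX: "card X = n"
  shows "\<And>i. i \<in> {1..n} \<Longrightarrow> elt X i \<in> X"
    and "elt X ` {1..n} = X"
    and "\<And>i i'. i \<in> {1..n} \<Longrightarrow> i' \<in> {1..n} \<Longrightarrow> i < i' \<Longrightarrow> last (elt X i) < last (elt X i')"
proof -
  define L where "L = sorted_list_of_set (last ` X)"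
  have lenL: "length L = n" unfolding L_def using fin inj cX by (simp add: card_image)
  have setL: "set L = last ` X" unfolding L_def using fin by simp
  have sL: "sorted_wrt (<) L" unfolding L_def by simp
  have elt_eq: "elt X i = inv_into X last (L ! (i - 1))" for i unfolding elt_def L_def by simp
  have inL: "L ! (i - 1) \<in> last ` X" if "i \<in> {1..n}" for i
    using that lenL setL by (metis atLeastAtMost_iff diff_less less_le_trans nth_mem zero_less_one le_numeral_extra(4) Suc_le_eq One_nat_def)
  show a: "elt X i \<in> X" if "i \<in> {1..n}" for i
    unfolding elt_eq using inL[OF that] by (rule inv_into_into)
  have la: "last (elt X i) = L ! (i - 1)" if "i \<in> {1..n}" for i
    unfolding elt_eq using inL[OF that] by (rule f_inv_into_f)
  show "elt X ` {1..n} = X"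
  proof
    show "elt X ` {1..n} \<subseteq> X" using a by blast
    show "X \<subseteq> elt X ` {1..n}"
    proof
      fix x assume x: "x \<in> X"
      then have "last x \<in> set L" using setL by blast
      then obtain k where k: "k < n" "L ! k = last x" using lenL by (metis in_set_conv_nth)
      have "elt X (Suc k) = x" unfolding elt_eq using k x inj by simp
      moreover have "Suc k \<in> {1..n}" using k by simp
      ultimately show "x \<in> elt X ` {1..n}" by (metis image_eqI)
    qed
  qed
  show "last (elt X i) < last (elt X i')" if "i \<in> {1..n}" "i' \<in> {1..n}" "i < i'" for i i'
    unfolding la[OF that(1)] la[OF that(2)]
    using sorted_wrt_nth_less[OF sL, of "i - 1" "i' - 1"] that lenL by auto
qed

lemma finite_CR_index: "finite (CR_index n d)"
  by (simp add: CR_index_def)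

lemma ctype_iff: "p \<in> CR_index n d \<Longrightarrow> q \<in> CR_index n d \<Longrightarrow> (p, q) \<in> ctype n d X \<longleftrightarrow> cf d X p \<le> cf d X q"
  by (simp add: ctype_def)

lemma inj_ctype:
  assumes X: "X \<in> nsubsets (omega_pow d) n" "inj_on last X"
    and X': "X' \<in> nsubsets (omega_pow d) n" "inj_on last X'"
    and t: "ctype n d X = ctype n d X'" and v: "cvals n d X = cvals n d X'"
  shows "X = X'"
proof -
  let ?I = "CR_index n d"
  have le: "\<forall>p\<in>?I. \<forall>q\<in>?I. (cf d X p \<le> cf d X q) = (cf d X' p \<le> cf d X' q)"
    using t ctype_iff by metis
  have im: "cf d X ` ?I = cf d X' ` ?I" using v by (simp add: cvals_def)
  have eqcf: "cf d X p = cf d X' p" if "p \<in> ?I" for p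
    using pullback_eq[OF finite_CR_index le im that] .
  have fX: "finite X" "card X = n" "X \<subseteq> omega_pow d" using X by (auto simp: nsubsets_def)
  have fX': "finite X'" "card X' = n" "X' \<subseteq> omega_pow d" using X' by (auto simp: nsubsets_def)
  have ee: "elt X i = elt X' i" if i: "i \<in> {1..n}" for i
  proof -
    have l1: "length (elt X i) = d" using elt_props(1)[OF fX(1) X(2) fX(2) i] fX(3) by (auto simp: omega_pow_def)
    have l2: "length (elt X' i) = d" using elt_props(1)[OF fX'(1) X'(2) fX'(2) i] fX'(3) by (auto simp: omega_pow_def)
    show ?thesis
    proof (rule nth_equalityI)
      show "length (elt X i) = length (elt X' i)" using l1 l2 by simp
    next
      fix t assume "t < length (elt X i)"
      then have tl: "t < d" using l1 by simp
      have "(i, d - 1 - t) \<in> ?I" using i tl by (auto simp: CR_index_def)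
      from eqcf[OF this] show "elt X i ! t = elt X' i ! t"
        using tl by (simp add: cf_def)
    qed
  qed
  have "X = elt X ` {1..n}" using elt_props(2)[OF fX(1) X(2) fX(2)] by simp
  also have "\<dots> = elt X' ` {1..n}" using ee by (intro image_cong) auto
  also have "\<dots> = X'" using elt_props(2)[OF fX'(1) X'(2) fX'(2)] by simp
  finally show ?thesis .
qed

lemma card_classes:
  fixes f :: "'a \<Rightarrow> nat"
  shows "card ((\<lambda>p. {q\<in>I. f p \<le> f q \<and> f q \<le> f p}) ` I) = card (f ` I)"
proof -
  have "(\<lambda>p. {q\<in>I. f p \<le> f q \<and> f q \<le> f p}) ` I = (\<lambda>v. {q\<in>I. f q = v}) ` f ` I"
    by (auto simp: image_image intro!: image_cong)
  moreover have "inj_on (\<lambda>v. {q\<in>I. f q = v}) (f ` I)"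
    by (rule inj_onI) blast
  ultimately show ?thesis by (simp add: card_image)
qed



definition mcl :: "nat \<Rightarrow> nat \<Rightarrow> ((nat \<times> nat) \<times> (nat \<times> nat)) set \<Rightarrow> nat" where
  "mcl n d R = card ((\<lambda>p. {q\<in>CR_index n d. (p, q) \<in> R \<and> (q, p) \<in> R}) ` CR_index n d)"

lemma key_X:
  assumes H: "infinite H" and X: "X \<in> nsubsets (emb H ` omega_pow d) n"
  shows "X \<in> nsubsets (omega_pow d) n" and "inj_on last X" and "cvals n d X \<subseteq> H"
    and "card (cvals n d X) = mcl n d (ctype n d X)"
    and "is_CR n d 1 (restrict (\<lambda>_. 0) {1..n}) (ctype n d X)"
proof -
  let ?S = "omega_pow d" and ?I = "CR_index n d" and ?e = "emb H"
  have XS': "X \<subseteq> ?e ` ?S" and finX: "finite X" and cX: "card X = n"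
    using X by (auto simp: nsubsets_def)
  have XS: "X \<subseteq> ?S" using XS' emb_in by blast
  show X1: "X \<in> nsubsets ?S n" using XS finX cX by (simp add: nsubsets_def)
  have inje: "inj (enumerate H)" using strict_mono_enumerate[OF H] by (rule strict_mono_imp_inj_on)
  have last_e: "last (?e a) = enumerate H (lab a)" if "a \<in> ?S" "d \<ge> 1" for a
  proof -
    have "length a = d" using that by (simp add: omega_pow_def)
    then have ne: "?e a \<noteq> []" using that by (metis emb_length list.size(3) not_one_le_zero)
    have "last (?e a) = ?e a ! (d - 1)" using ne \<open>length a = d\<close> by (simp add: last_conv_nth)
    also have "\<dots> = enumerate H (lab (take (Suc (d - 1)) a))" using \<open>length a = d\<close> that by (simp add: emb_nth)
    finally show ?thesis using \<open>length a = d\<close> that by simp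
  qed
  show injl: "inj_on last X"
  proof (cases "d = 0")
    case True
    then have "X \<subseteq> {[]}" using XS by (auto simp: omega_pow_def)
    then show ?thesis by (auto intro: inj_onI)
  next
    case False
    show ?thesis
    proof (rule inj_onI)
      fix u v assume uv: "u \<in> X" "v \<in> X" "last u = last v"
      then obtain a b where ab: "a \<in> ?S" "b \<in> ?S" "u = ?e a" "v = ?e b" using XS' by blast
      then have "enumerate H (lab a) = enumerate H (lab b)" using last_e False uv by simp
      then have "a = b" using inje inj_lab by (simp add: inj_eq)
      then show "u = v" using ab by simp
    qed
  qed
  define zz where "zz i = inv_into ?S ?e (elt X i)" for i
  have eltX: "elt X i \<in> X" if "i \<in> {1..n}" for i using elt_props(1)[OF finX injl cX that] .
  have zz: "zz i \<in> ?S" "?e (zz i) = elt X i" if "i \<in> {1..n}" for i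
    using eltX[OF that] XS' unfolding zz_def by (auto intro: inv_into_into f_inv_into_f)
  have lz: "length (zz i) = d" if "i \<in> {1..n}" for i using zz(1)[OF that] by (simp add: omega_pow_def)
  define G where "G p = lab (take (d - snd p) (zz (fst p)))" for p
  have cfG: "cf d X p = enumerate H (G p)" if pI: "p \<in> ?I" for p
  proof -
    obtain i j where p: "p = (i, j)" "i \<in> {1..n}" "j < d" using pI by (auto simp: CR_index_def)
    have "cf d X p = ?e (zz i) ! (d - 1 - j)" using zz(2)[OF p(2)] p by (simp add: cf_def)
    also have "\<dots> = enumerate H (lab (take (Suc (d - 1 - j)) (zz i)))"
      using lz[OF p(2)] p by (simp add: emb_nth)
    also have "Suc (d - 1 - j) = d - j" using p by simp
    finally show ?thesis using p by (simp add: G_def)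
  qed
  have leG: "cf d X p \<le> cf d X q \<longleftrightarrow> G p \<le> G q" if "p \<in> ?I" "q \<in> ?I" for p q
    using cfG[OF that(1)] cfG[OF that(2)] H by simp
  show "cvals n d X \<subseteq> H" unfolding cvals_def using cfG H by (auto intro: enumerate_in_set)
  have "(\<lambda>p. {q\<in>?I. (p, q) \<in> ctype n d X \<and> (q, p) \<in> ctype n d X}) ` ?I
      = (\<lambda>p. {q\<in>?I. cf d X p \<le> cf d X q \<and> cf d X q \<le> cf d X p}) ` ?I"
    by (intro image_cong refl) (auto simp: ctype_def)
  then show "card (cvals n d X) = mcl n d (ctype n d X)"
    unfolding mcl_def cvals_def using card_classes[where f="cf d X" and I="?I"] by simp
  let ?R = "ctype n d X"
  have Rle: "(p, q) \<in> ?R \<longleftrightarrow> p \<in> ?I \<and> q \<in> ?I \<and> G p \<le> G q" for p q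
    using leG[of p q] by (auto simp: ctype_def)
  have RleC: "(p, q) \<in> ?R \<longleftrightarrow> p \<in> ?I \<and> q \<in> ?I \<and> cf d X p \<le> cf d X q" for p q
    by (auto simp: ctype_def)
  have inI: "(i, j) \<in> ?I \<longleftrightarrow> i \<in> {1..n} \<and> j < d" for i j by (auto simp: CR_index_def)
  have c1: "(d \<ge> 1 \<longrightarrow> (\<forall>i\<in>{1..n}. \<forall>i'\<in>{1..n}. i < i' \<longrightarrow>
           (((i, 0), (i', 0)) \<in> ?R \<and> ((i', 0), (i, 0)) \<notin> ?R)))"
  proof (intro impI ballI)
    fix i i' assume d1: "d \<ge> 1" and i: "i \<in> {1..n}" "i' \<in> {1..n}" and ii: "i < i'"
    have "cf d X (k, 0) = last (elt X k)" if "k \<in> {1..n}" for k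
    proof -
      have "length (elt X k) = d" using zz[OF that] lz[OF that] by (metis emb_length)
      then have "elt X k \<noteq> []" using d1 by auto
      then show ?thesis using d1 \<open>length (elt X k) = d\<close> by (simp add: cf_def last_conv_nth)
    qed
    then have "cf d X (i, 0) < cf d X (i', 0)"
      using elt_props(3)[OF finX injl cX i ii] i by simp
    then show "((i, 0), (i', 0)) \<in> ?R \<and> ((i', 0), (i, 0)) \<notin> ?R"
      using RleC inI i d1 by auto
  qed
  have c0: "(d = 0 \<longrightarrow> (\<forall>i\<in>{1..n}. \<forall>i'\<in>{1..n}. i < i' \<longrightarrow>
      restrict (\<lambda>_. 0::nat) {1..n} i < restrict (\<lambda>_. 0) {1..n} i'))"
  proof
    assume "d = 0"
    then have "X \<subseteq> {[]}" using XS by (auto simp: omega_pow_def)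
    then have "n \<le> 1" using cX using card_mono[of "{[]}" X] by simp
    then show "\<forall>i\<in>{1..n}. \<forall>i'\<in>{1..n}. i < i' \<longrightarrow> restrict (\<lambda>_. 0::nat) {1..n} i < restrict (\<lambda>_. 0) {1..n} i'"
      by auto
  qed
  have c3: "\<forall>i\<in>{1..n}. \<forall>j<d. \<forall>j'<d. j > j' \<longrightarrow> ((i, j), (i, j')) \<in> ?R \<and> ((i, j'), (i, j)) \<notin> ?R"
  proof (intro ballI allI impI)
    fix i j j' assume i: "i \<in> {1..n}" and j: "j < d" "j' < d" "j' < j"
    have "G (i, j) < G (i, j')" unfolding G_def using lz[OF i] j by (simp add: lab_prefix_less)
    then show "((i, j), (i, j')) \<in> ?R \<and> ((i, j'), (i, j)) \<notin> ?R" using Rle inI i j by auto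
  qed
  have c4: "\<forall>i\<in>{1..n}. \<forall>i'\<in>{1..n}. \<forall>j<d. \<forall>j'<d. (((i, j), (i', j')) \<in> ?R \<and> ((i', j'), (i, j)) \<in> ?R) \<longrightarrow> j = j'"
  proof (intro ballI allI impI)
    fix i i' j j' assume i: "i \<in> {1..n}" "i' \<in> {1..n}" and j: "j < d" "j' < d"
      and e: "((i, j), (i', j')) \<in> ?R \<and> ((i', j'), (i, j)) \<in> ?R"
    then have "G (i, j) = G (i', j')" using Rle by (meson order_antisym)
    then have "take (d - j) (zz i) = take (d - j') (zz i')" unfolding G_def using inj_lab by (simp add: inj_eq)
    then have "length (take (d - j) (zz i)) = length (take (d - j') (zz i'))" by simp
    then show "j = j'" using lz[OF i(1)] lz[OF i(2)] j by simp
  qed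
  have c5: "\<forall>i\<in>{1..n}. \<forall>i'\<in>{1..n}. \<forall>j<d. j > 0 \<longrightarrow>
            \<not> (((i, j), (i', j)) \<in> ?R \<and> ((i', j), (i, j)) \<in> ?R) \<longrightarrow>
            \<not> (((i, j - 1), (i', j - 1)) \<in> ?R \<and> ((i', j - 1), (i, j - 1)) \<in> ?R)"
  proof (intro ballI allI impI notI)
    fix i i' j assume i: "i \<in> {1..n}" "i' \<in> {1..n}" and j: "j < d" "0 < j"
      and ne: "\<not> (((i, j), (i', j)) \<in> ?R \<and> ((i', j), (i, j)) \<in> ?R)"
      and e: "((i, j - 1), (i', j - 1)) \<in> ?R \<and> ((i', j - 1), (i, j - 1)) \<in> ?R"
    then have "G (i, j - 1) = G (i', j - 1)" using Rle by (meson order_antisym)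
    then have t: "take (Suc (d - j)) (zz i) = take (Suc (d - j)) (zz i')"
      unfolding G_def using inj_lab j by (simp add: inj_eq Suc_diff_le)
    have "take (d - j) (zz i) = take (d - j) (zz i')"
      using arg_cong[OF t, of "take (d - j)"] by simp
    then have "G (i, j) = G (i', j)" by (simp add: G_def)
    then show False using ne Rle inI i j by auto
  qed
  have rf: "refl_on ?I ?R" unfolding refl_on_def using RleC by simp
  have tr: "trans ?R"
  proof (rule transI)
    fix x y z assume "(x, y) \<in> ?R" "(y, z) \<in> ?R"
    then have "x \<in> ?I" "z \<in> ?I" "cf d X x \<le> cf d X y" "cf d X y \<le> cf d X z" using RleC by blast+
    then show "(x, z) \<in> ?R" using RleC by (meson order_trans)
  qed
  have sub: "?R \<subseteq> ?I \<times> ?I" using RleC by auto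
  have pre: "preorder_on ?I ?R" unfolding preorder_on_def using rf tr sub by blast
  have tot: "total_on ?I ?R" unfolding total_on_def using RleC by auto
  show "is_CR n d 1 (restrict (\<lambda>_. 0) {1..n}) ?R"
    unfolding is_CR_def Let_def
  proof (intro conjI)
    show "restrict (\<lambda>_. 0::nat) {1..n} \<in> {1..n} \<rightarrow>\<^sub>E {0..<1}" by auto
  qed (fact c1 c0 c3 c4 c5 pre tot sub | simp)+
qed



theorem theorem8p3:
  fixes n d :: nat
  shows "T_num n (omega_pow d) \<le> enat (P_num n d 1)"
proof -
  let ?S = "omega_pow d" and ?I = "CR_index n d"
  let ?Y0 = "restrict (\<lambda>_. 0::nat) {1..n}"
  have finI: "finite ?I" by (rule finite_CR_index)
  have finCR: "finite {(Y, R). is_CR n d 1 Y R}"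
  proof (rule finite_subset)
    show "{(Y, R). is_CR n d 1 Y R} \<subseteq> ({1..n} \<rightarrow>\<^sub>E {0..<1}) \<times> Pow (?I \<times> ?I)"
      by (auto simp: is_CR_def Let_def)
    show "finite (({1..n} \<rightarrow>\<^sub>E {0..<(1::nat)}) \<times> Pow (?I \<times> ?I))"
      using finI by (intro finite_cartesian_product finite_PiE) auto
  qed
  have cardR: "card {R. is_CR n d 1 ?Y0 R} \<le> P_num n d 1"
  proof -
    have "card {R. is_CR n d 1 ?Y0 R} = card ((\<lambda>R. (?Y0, R)) ` {R. is_CR n d 1 ?Y0 R})"
      by (rule card_image[symmetric]) (auto intro: inj_onI)
    also have "\<dots> \<le> card {(Y, R). is_CR n d 1 Y R}"
      by (rule card_mono[OF finCR]) auto
    finally show ?thesis by (simp add: P_num_def)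
  qed
  have finR: "finite {R. is_CR n d 1 ?Y0 R}"
  proof (rule finite_subset)
    show "{R. is_CR n d 1 ?Y0 R} \<subseteq> Pow (?I \<times> ?I)" by (auto simp: is_CR_def Let_def)
  qed (use finI in simp)
  have ok: "T_bound_ok n ?S (P_num n d 1)"
    unfolding T_bound_ok_def
  proof (intro allI impI)
    fix c :: nat and COL :: "nat list set \<Rightarrow> nat"
    assume c: "c \<ge> 1" and col: "\<forall>X\<in>nsubsets ?S n. COL X \<in> {1..c}"
    define Q where "Q X R V \<longleftrightarrow> X \<in> nsubsets ?S n \<and> inj_on last X \<and> ctype n d X = R \<and> cvals n d X = V" for X R V
    define \<chi> where "\<chi> R V = (if \<exists>X. Q X R V then COL (SOME X. Q X R V) else 0)" for R V
    have bnd: "\<forall>R\<in>Pow (?I \<times> ?I). \<forall>V. \<chi> R V < Suc c"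
    proof (intro ballI allI)
      fix R V
      show "\<chi> R V < Suc c"
      proof (cases "\<exists>X. Q X R V")
        case True
        then have "Q (SOME X. Q X R V) R V" by (rule someI_ex)
        then have "COL (SOME X. Q X R V) \<in> {1..c}" using col by (auto simp: Q_def)
        then show ?thesis using True by (simp add: \<chi>_def)
      qed (simp add: \<chi>_def)
    qed
    obtain H where H: "infinite H"
      "\<forall>R\<in>Pow (?I \<times> ?I). \<exists>t. \<forall>V. V \<subseteq> H \<and> finite V \<and> card V = mcl n d R \<longrightarrow> \<chi> R V = t"
      using multi_ramsey[of "Pow (?I \<times> ?I)" "UNIV :: nat set" \<chi> "Suc c" "mcl n d"] finI bnd
      by auto
    from H(2) obtain tt where tt: "\<forall>R\<in>Pow (?I \<times> ?I). \<forall>V. V \<subseteq> H \<and> finite V \<and> card V = mcl n d R \<longrightarrow> \<chi> R V = tt R"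
      by metis
    define S' where "S' = emb H ` ?S"
    have colX: "COL X = tt (ctype n d X) \<and> is_CR n d 1 ?Y0 (ctype n d X)" if X: "X \<in> nsubsets S' n" for X
    proof -
      note k = key_X[OF H(1) X[unfolded S'_def]]
      have CR: "is_CR n d 1 ?Y0 (ctype n d X)" using k(5) .
      have QX: "Q X (ctype n d X) (cvals n d X)" using k(1,2) by (simp add: Q_def)
      have "(SOME X'. Q X' (ctype n d X) (cvals n d X)) = X"
      proof (rule some_equality)
        show "Q X (ctype n d X) (cvals n d X)" using QX .
        fix X' assume "Q X' (ctype n d X) (cvals n d X)"
        then show "X' = X" using inj_ctype k(1,2) unfolding Q_def by metis
      qed
      then have chi: "\<chi> (ctype n d X) (cvals n d X) = COL X" using QX by (auto simp: \<chi>_def)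
      have "ctype n d X \<in> Pow (?I \<times> ?I)" by (auto simp: ctype_def)
      moreover have "finite (cvals n d X)" using finI by (simp add: cvals_def)
      ultimately have "\<chi> (ctype n d X) (cvals n d X) = tt (ctype n d X)"
        using tt k(3,4) by blast
      then show ?thesis using chi CR by simp
    qed
    have "COL ` nsubsets S' n \<subseteq> tt ` {R. is_CR n d 1 ?Y0 R}"
      using colX by blast
    then have "card (COL ` nsubsets S' n) \<le> card (tt ` {R. is_CR n d 1 ?Y0 R})"
      using finR by (intro card_mono) auto
    also have "\<dots> \<le> card {R. is_CR n d 1 ?Y0 R}" by (rule card_image_le[OF finR])
    also have "\<dots> \<le> P_num n d 1" by (rule cardR)
    finally have cd: "card (COL ` nsubsets S' n) \<le> P_num n d 1" .
    have "S' \<subseteq> ?S" unfolding S'_def using emb_in by blast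
    moreover have "order_equiv S' ?S" unfolding S'_def by (rule emb_order_equiv[OF H(1)])
    ultimately show "\<exists>S'. S' \<subseteq> ?S \<and> order_equiv S' ?S \<and> card (COL ` nsubsets S' n) \<le> P_num n d 1"
      using cd by blast
  qed
  then have "T_num n ?S = enat (LEAST t. T_bound_ok n ?S t)" unfolding T_num_def by auto
  also have "\<dots> \<le> enat (P_num n d 1)" using ok by (simp add: Least_le)
  finally show ?thesis .
qed


end
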